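(* Let $E,A\in\mathbb{R}^{n\times n}$ with $A$ nonsingular and $\mathrm{rank}\,E=r\ge1$, and let $(X,Y)$ be a full rank decomposition of $E$ with $X,Y\in\mathbb{R}^{n\times r}$. (i) If $(E,A)$ has index one, then $Y^T\mathcal{C}(E,A)=\mathbb{R}^r$. (ii) If $(E,A)$ has index two, then $Y^T\mathcal{C}(E,A)=\mathrm{Im}\big((Y^TA^{-1}X)^2\big)$ and this subspace has dimension strictly less than $r$.
   Context: For $E,A\in\mathbb{R}^{n\times n}$ with $A$ nonsingular, $(E,A)$ denotes the descriptor system $E\dot x=Ax$. Its index is the smallest integer $k^*\ge0$ with $\mathrm{Im}((A^{-1}E)^{k^*+1})=\mathrm{Im}((A^{-1}E)^{k^*})$, and its consistency space is $\mathcal{C}(E,A)=\mathrm{Im}((A^{-1}E)^{k^*})$. A full rank decomposition of $E$ is a pair $(X,Y)$ of matrices with full column rank such that $E=XY^T$. *)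

theory Defs
  imports "HOL-Analysis.Analysis"
begin

definition mat_image :: "real^'n^'m \<Rightarrow> (real^'m) set" where
  "mat_image M = range (\<lambda>x. M *v x)"

fun mat_pow :: "real^'n^'n \<Rightarrow> nat \<Rightarrow> real^'n^'n" where
  "mat_pow M 0 = mat 1"
| "mat_pow M (Suc k) = M ** mat_pow M k"

definition dae_index :: "real^'n^'n \<Rightarrow> real^'n^'n \<Rightarrow> nat" where
  "dae_index E A = (LEAST k. mat_image (mat_pow (matrix_inv A ** E) (Suc k))
                            = mat_image (mat_pow (matrix_inv A ** E) k))"

definition consistency_space :: "real^'n^'n \<Rightarrow> real^'n^'n \<Rightarrow> (real^'n) set" where
  "consistency_space E A = mat_image (mat_pow (matrix_inv A ** E) (dae_index E A))"

definition full_rank_decomposition :: "real^'n^'n \<Rightarrow> real^'r^'n \<Rightarrow> real^'r^'n \<Rightarrow> bool" where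
  "full_rank_decomposition E X Y \<longleftrightarrow>
     rank X = CARD('r) \<and> rank Y = CARD('r) \<and> E = X ** transpose Y"

end

theory Submission
  imports Defs
begin

lemma mat_image_mul: "mat_image (B ** C) = (\<lambda>x. B *v x) ` mat_image C"
  unfolding mat_image_def by (auto simp: matrix_vector_mul_assoc[symmetric])

lemma mat_image_subspace: "subspace (mat_image B)"
  unfolding mat_image_def
  using linear_subspace_image[OF matrix_vector_mul_linear subspace_UNIV] by simp

lemma mat_image_mono: "mat_image (mat_pow B (Suc k)) \<subseteq> mat_image (mat_pow B k)"
proof (induction k)
  case 0
  then show ?case by (auto simp: mat_image_def)
next
  case (Suc k)
  have "mat_image (mat_pow B (Suc (Suc k))) = (\<lambda>x. B *v x) ` mat_image (mat_pow B (Suc k))"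
    by (simp add: mat_image_mul)
  also have "\<dots> \<subseteq> (\<lambda>x. B *v x) ` mat_image (mat_pow B k)" using Suc by blast
  also have "\<dots> = mat_image (mat_pow B (Suc k))" by (simp add: mat_image_mul)
  finally show ?case .
qed

lemma mat_stab_exists:
  fixes B :: "real^'n^'n"
  shows "\<exists>k. mat_image (mat_pow B (Suc k)) = mat_image (mat_pow B k)"
proof (rule ccontr)
  assume H: "\<not> ?thesis"
  have "dim (mat_image (mat_pow B k)) + k \<le> CARD('n)" for k
  proof (induction k)
    case 0
    have "dim (mat_image (mat_pow B 0)) \<le> CARD('n)"
      by (metis dim_subset_UNIV_cart)
    then show ?case by simp
  next
    case (Suc k)
    have ne: "mat_image (mat_pow B (Suc k)) \<noteq> mat_image (mat_pow B k)" using H by blast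
    have "dim (mat_image (mat_pow B (Suc k))) < dim (mat_image (mat_pow B k))"
      using ne dim_subset[OF mat_image_mono[of B k]]
      by (metis le_neq_implies_less not_le_imp_less subspace_dim_equal mat_image_subspace mat_image_mono)
    then show ?case using Suc by simp
  qed
  from this[of "Suc CARD('n)"] show False by simp
qed

theorem mainTheorem10:
  fixes E A :: "real^'n^'n" and X Y :: "real^'r^'n"
  assumes "invertible A"
    and "rank E = CARD('r)"
    and "full_rank_decomposition E X Y"
  shows "(dae_index E A = 1 \<longrightarrow>
            (\<lambda>v. transpose Y *v v) ` consistency_space E A = (UNIV :: (real^'r) set))
       \<and> (dae_index E A = 2 \<longrightarrow>
            (\<lambda>v. transpose Y *v v) ` consistency_space E A
               = mat_image (mat_pow (transpose Y ** matrix_inv A ** X) 2)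
          \<and> dim ((\<lambda>v. transpose Y *v v) ` consistency_space E A) < CARD('r))"
proof -
  define Ai where "Ai = matrix_inv A"
  define N where "N = Ai ** E"
  define P where "P = Ai ** X"
  define M where "M = transpose Y ** Ai ** X"
  have E: "E = X ** transpose Y" and rX: "rank X = CARD('r)" and rY: "rank Y = CARD('r)"
    using assms(3) unfolding full_rank_decomposition_def by auto
  have AiA: "A ** Ai = mat 1 \<and> Ai ** A = mat 1"
    unfolding Ai_def matrix_inv_def using assms(1) unfolding invertible_def by (rule someI_ex)
  have injAi: "inj ((*v) Ai)"
    by (metis AiA inj_on_inverseI matrix_vector_mul_assoc matrix_vector_mul_lid)
  have injX: "inj ((*v) X)" using rX full_rank_injective by blast
  have injP: "inj ((*v) P)"
    unfolding P_def using injAi injX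
    by (metis (no_types, lifting) inj_def matrix_vector_mul_assoc)
  have surjY: "surj ((*v) (transpose Y))"
    using rY full_rank_surjective rank_transpose by metis
  have NP: "N = P ** transpose Y" unfolding N_def P_def E by (simp add: matrix_mul_assoc)
  have MP: "M = transpose Y ** P" unfolding M_def P_def by (simp add: matrix_mul_assoc)
  have comm: "transpose Y ** mat_pow N k = mat_pow M k ** transpose Y" for k
  proof (induction k)
    case 0 then show ?case by (simp add: matrix_mul_lid matrix_mul_rid)
  next
    case (Suc k)
    have "transpose Y ** mat_pow N (Suc k) = (transpose Y ** P) ** (transpose Y ** mat_pow N k)"
      by (subst mat_pow.simps) (simp add: NP matrix_mul_assoc)
    also have "\<dots> = M ** (mat_pow M k ** transpose Y)" using Suc MP by simp
    finally show ?case by (simp add: matrix_mul_assoc)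
  qed
  have NS: "mat_pow N (Suc k) = P ** (mat_pow M k ** transpose Y)" for k
  proof -
    have "mat_pow N (Suc k) = P ** (transpose Y ** mat_pow N k)"
      by (subst mat_pow.simps) (simp add: NP matrix_mul_assoc)
    then show ?thesis by (simp add: comm)
  qed
  have imgY: "(\<lambda>v. transpose Y *v v) ` mat_image (mat_pow N k) = mat_image (mat_pow M k)" for k
  proof -
    have "(\<lambda>v. transpose Y *v v) ` mat_image (mat_pow N k) = mat_image (transpose Y ** mat_pow N k)"
      by (simp add: mat_image_mul)
    also have "\<dots> = (\<lambda>x. mat_pow M k *v x) ` range ((*v) (transpose Y))"
      unfolding comm mat_image_def by (auto simp: matrix_vector_mul_assoc[symmetric])
    also have "\<dots> = mat_image (mat_pow M k)" using surjY unfolding mat_image_def by simp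
    finally show ?thesis .
  qed
  have imgN: "mat_image (mat_pow N (Suc k)) = (\<lambda>x. P *v x) ` mat_image (mat_pow M k)" for k
  proof -
    have "mat_image (mat_pow N (Suc k)) = (\<lambda>x. P *v x) ` mat_image (mat_pow M k ** transpose Y)"
      unfolding NS by (rule mat_image_mul)
    also have "mat_image (mat_pow M k ** transpose Y) = mat_image (mat_pow M k)"
      using surjY unfolding mat_image_def by (auto simp: matrix_vector_mul_assoc[symmetric])
      (metis UNIV_I image_iff)
    finally show ?thesis .
  qed
  have key: "mat_image (mat_pow N 2) = mat_image (mat_pow N 1) \<longleftrightarrow> mat_image M = UNIV"
  proof -
    have "mat_image (mat_pow N 2) = (\<lambda>x. P *v x) ` mat_image (mat_pow M 1)"
      using imgN[of 1] by (simp add: numeral_2_eq_2)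
    moreover have "mat_image (mat_pow N 1) = (\<lambda>x. P *v x) ` mat_image (mat_pow M 0)"
      using imgN[of 0] by simp
    moreover have "mat_image (mat_pow M 0) = UNIV" by (simp add: mat_image_def)
    moreover have "mat_pow M 1 = M" by (simp add: matrix_mul_rid)
    ultimately show ?thesis using injP by (simp add: inj_image_eq_iff)
  qed
  have idx: "dae_index E A = (LEAST k. mat_image (mat_pow N (Suc k)) = mat_image (mat_pow N k))"
    unfolding dae_index_def N_def Ai_def ..
  have cs: "consistency_space E A = mat_image (mat_pow N (dae_index E A))"
    unfolding consistency_space_def N_def Ai_def ..
  have MM: "transpose Y ** matrix_inv A ** X = M" unfolding M_def Ai_def ..
  show ?thesis
  proof (intro conjI impI)
    assume i1: "dae_index E A = 1"
    have "mat_image (mat_pow N (Suc 1)) = mat_image (mat_pow N 1)"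
      using LeastI_ex[OF mat_stab_exists[of N]] i1 idx by simp
    then have "mat_image M = UNIV" using key by (simp add: numeral_2_eq_2)
    then show "(\<lambda>v. transpose Y *v v) ` consistency_space E A = UNIV"
      using imgY[of 1] cs i1 by (simp add: matrix_mul_rid)
  next
    assume i2: "dae_index E A = 2"
    show "(\<lambda>v. transpose Y *v v) ` consistency_space E A
               = mat_image (mat_pow (transpose Y ** matrix_inv A ** X) 2)"
      using imgY cs i2 MM by simp
  next
    assume i2: "dae_index E A = 2"
    have "\<not> (mat_image (mat_pow N (Suc 1)) = mat_image (mat_pow N 1))"
      by (rule not_less_Least) (use i2 idx in simp)
    then have nM: "mat_image M \<noteq> UNIV" using key by (simp add: numeral_2_eq_2)
    have "dim (mat_image M) < CARD('r)"
    proof (rule ccontr)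
      assume "\<not> ?thesis"
      then have "dim (UNIV::(real^'r) set) \<le> dim (mat_image M)" by simp
      then show False using nM subspace_dim_equal[OF subspace_UNIV mat_image_subspace, of M]
        by (metis mat_image_subspace subspace_UNIV subspace_dim_equal top_greatest)
    qed
    moreover have "mat_image (mat_pow M 2) \<subseteq> mat_image M"
      using mat_image_mono[of M 1] by (simp add: numeral_2_eq_2 matrix_mul_rid)
    ultimately have "dim (mat_image (mat_pow M 2)) < CARD('r)"
      using dim_subset by (metis le_less_trans)
    then show "dim ((\<lambda>v. transpose Y *v v) ` consistency_space E A) < CARD('r)"
      using imgY cs i2 by simp
  qed
qed

end
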